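(* Let $T:I\to I$, $I=[0,1]$, be a non-singular map whose Perron–Frobenius operator $P$ satisfies: there exist $\alpha_0\in(0,1)$ and $B_0\ge0$ with $VPf\le\alpha_0Vf+B_0\|f\|_1$ for all $f\in BV(I)$. Let $\Gamma=\max\{\alpha_0+1,B_0\}$, let $\eta$ be a finite partition of $I$ into intervals, $\varepsilon=\mathrm{mesh}(\eta)$, and $P_\eta=\Pi_\eta\circ P\circ\Pi_\eta$. Then (1) $|||P_\eta-P|||\le\Gamma\varepsilon$; (2) if $H\subset I$ is an open interval with $\lambda(H)\le\Gamma\varepsilon$, then $|||P_\eta-P_H|||\le 2\Gamma\varepsilon$.
   Context: $\lambda$ is Lebesgue measure on $I$. For $f\in L^1(I,\lambda)$, $Vf=\inf\{\mathrm{var}\,\bar f:\bar f=f\text{ a.e.}\}$; $BV(I)=\{f: Vf<\infty\}$ with norm $\|f\|_{BV}=Vf+\|f\|_1$. The Perron–Frobenius operator is defined by $\int_APf\,d\lambda=\int_{T^{-1}A}f\,d\lambda$. $\mathrm{mesh}(\eta)$ is the maximal length of an interval of $\eta$; $\Pi_\eta f(x)=\frac1{\lambda(J)}\int_Jf\,d\lambda$ for $x\in J\in\eta$. For an open interval $H$, $X_0=I\setminus H$ and $P_Hf=P(f\chi_{X_0})$ is the Perron–Frobenius operator of the map with hole $T|_{X_0}$. For an operator $Q$ on $BV(I)$, the mixed norm is $|||Q|||=\sup_{\|f\|_{BV}\le1}\|Qf\|_1$. *)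

theory Defs
  imports "HOL-Analysis.Analysis"
begin

abbreviation unitI :: "real set" where "unitI \<equiv> {0..1}"

abbreviation lamI :: "real measure" where "lamI \<equiv> lebesgue_on {0..1}"

definition var01 :: "(real \<Rightarrow> real) \<Rightarrow> ennreal" where
  "var01 g = (SUP xs \<in> {xs. sorted xs \<and> set xs \<subseteq> {0..1}}.
      ennreal (\<Sum>i < length xs - 1. \<bar>g (xs ! Suc i) - g (xs ! i)\<bar>))"

definition Vvar :: "(real \<Rightarrow> real) \<Rightarrow> ennreal" where
  "Vvar f = (INF g \<in> {g. AE x in lamI. g x = f x}. var01 g)"

definition L1norm :: "(real \<Rightarrow> real) \<Rightarrow> ennreal" where
  "L1norm f = (\<integral>\<^sup>+ x. ennreal \<bar>f x\<bar> \<partial>lamI)"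

definition BV01 :: "(real \<Rightarrow> real) set" where
  "BV01 = {f. integrable lamI f \<and> Vvar f < \<infinity>}"

definition BVnorm :: "(real \<Rightarrow> real) \<Rightarrow> ennreal" where
  "BVnorm f = Vvar f + L1norm f"

definition mixnorm :: "((real \<Rightarrow> real) \<Rightarrow> (real \<Rightarrow> real)) \<Rightarrow> ennreal" where
  "mixnorm Q = (SUP f \<in> {f \<in> BV01. BVnorm f \<le> 1}. L1norm (Q f))"

definition nonsingular01 :: "(real \<Rightarrow> real) \<Rightarrow> bool" where
  "nonsingular01 T \<longleftrightarrow> (\<forall>x\<in>{0..1}. T x \<in> {0..1}) \<and> T \<in> borel_measurable lamI \<and>
     (\<forall>A. A \<in> null_sets lamI \<longrightarrow> T -` A \<inter> {0..1} \<in> null_sets lamI)"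

definition is_PF :: "(real \<Rightarrow> real) \<Rightarrow> ((real \<Rightarrow> real) \<Rightarrow> (real \<Rightarrow> real)) \<Rightarrow> bool" where
  "is_PF T P \<longleftrightarrow> (\<forall>f. integrable lamI f \<longrightarrow> integrable lamI (P f) \<and>
     (\<forall>A \<in> sets lamI. (LINT x:A|lamI. P f x) = (LINT x:(T -` A \<inter> {0..1})|lamI. f x)))"

definition interval_partition01 :: "real set set \<Rightarrow> bool" where
  "interval_partition01 \<eta> \<longleftrightarrow> finite \<eta> \<and> disjoint \<eta> \<and> \<Union>\<eta> = {0..1} \<and>
     (\<forall>J\<in>\<eta>. is_interval J \<and> J \<noteq> {})"

definition mesh :: "real set set \<Rightarrow> real" where
  "mesh \<eta> = Max ((\<lambda>J. measure lborel J) ` \<eta>)"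

definition Pi_eta :: "real set set \<Rightarrow> (real \<Rightarrow> real) \<Rightarrow> (real \<Rightarrow> real)" where
  "Pi_eta \<eta> f x = (\<Sum>J\<in>\<eta>. indicator J x * ((LINT y:J|lebesgue. f y) / measure lebesgue J))"

definition P_hole :: "((real \<Rightarrow> real) \<Rightarrow> (real \<Rightarrow> real)) \<Rightarrow> real set \<Rightarrow> (real \<Rightarrow> real) \<Rightarrow> (real \<Rightarrow> real)" where
  "P_hole P H f = P (\<lambda>x. f x * indicator ({0..1} - H) x)"

end

theory Submission
  imports Defs
begin


fun svar :: "(real \<Rightarrow> real) \<Rightarrow> real list \<Rightarrow> real" where
  "svar g [] = 0"
| "svar g [x] = 0"
| "svar g (x # y # zs) = \<bar>g y - g x\<bar> + svar g (y # zs)"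

lemma svar_sum: "svar g xs = (\<Sum>i < length xs - 1. \<bar>g (xs ! Suc i) - g (xs ! i)\<bar>)"
proof (induction g xs rule: svar.induct)
  case (3 g x y zs)
  have "(\<Sum>i < length (x # y # zs) - 1. \<bar>g ((x # y # zs) ! Suc i) - g ((x # y # zs) ! i)\<bar>)
     = \<bar>g y - g x\<bar> + (\<Sum>i < length (y # zs) - 1. \<bar>g ((y # zs) ! Suc i) - g ((y # zs) ! i)\<bar>)"
  proof -
    have e: "length (x # y # zs) - 1 = Suc (length (y # zs) - 1)" by simp
    show ?thesis unfolding e sum.lessThan_Suc_shift by simp
  qed
  then show ?case using 3 by simp
qed auto

lemma svar_nonneg: "0 \<le> svar g xs"
  by (induction g xs rule: svar.induct) auto

lemma svar_append: "svar g xs + svar g ys \<le> svar g (xs @ ys)"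
proof (induction g xs rule: svar.induct)
  case (2 g x)
  then show ?case by (cases ys) (auto simp: svar_nonneg)
qed auto

definition varOn :: "(real \<Rightarrow> real) \<Rightarrow> real \<Rightarrow> real \<Rightarrow> ennreal" where
  "varOn g a b = (SUP xs \<in> {xs. sorted xs \<and> set xs \<subseteq> {a..b}}. ennreal (svar g xs))"

lemma var01_varOn: "var01 g = varOn g 0 1"
  unfolding var01_def varOn_def svar_sum ..

lemma varOn_ge: "sorted xs \<Longrightarrow> set xs \<subseteq> {a..b} \<Longrightarrow> ennreal (svar g xs) \<le> varOn g a b"
  unfolding varOn_def by (rule SUP_upper) auto

lemma varOn_mono: "a \<le> a' \<Longrightarrow> b' \<le> b \<Longrightarrow> varOn g a' b' \<le> varOn g a b"
  unfolding varOn_def by (rule SUP_subset_mono) auto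

lemma varOn_pair: "x \<in> {a..b} \<Longrightarrow> y \<in> {a..b} \<Longrightarrow> ennreal \<bar>g x - g y\<bar> \<le> varOn g a b"
proof -
  assume xy: "x \<in> {a..b}" "y \<in> {a..b}"
  have "svar g [min x y, max x y] = \<bar>g x - g y\<bar>"
    by (auto simp: min_def max_def)
  moreover have "ennreal (svar g [min x y, max x y]) \<le> varOn g a b"
    using xy by (intro varOn_ge) (auto simp: min_def max_def)
  ultimately show ?thesis by simp
qed

lemma varOn_split: "m \<in> {a..c} \<Longrightarrow> varOn g a m + varOn g m c \<le> varOn g a c"
proof -
  assume m: "m \<in> {a..c}"
  have "ennreal (svar g xs) + ennreal (svar g ys) \<le> varOn g a c"
    if xs: "sorted xs" "set xs \<subseteq> {a..m}" and ys: "sorted ys" "set ys \<subseteq> {m..c}" for xs ys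
  proof -
    have "ennreal (svar g xs) + ennreal (svar g ys) = ennreal (svar g xs + svar g ys)"
      by (simp add: svar_nonneg)
    also have "\<dots> \<le> ennreal (svar g (xs @ ys))" by (rule ennreal_leI, rule svar_append)
    also have "\<dots> \<le> varOn g a c"
      using xs ys m by (intro varOn_ge) (fastforce simp: sorted_append subset_iff)+
    finally show ?thesis .
  qed
  moreover have ne: "\<And>S. {xs. sorted xs \<and> set xs \<subseteq> S} \<noteq> {}"
    by (metis (mono_tags, lifting) empty_iff empty_set empty_subsetI mem_Collect_eq sorted0)
  ultimately show ?thesis
    unfolding varOn_def[of g a m] varOn_def[of g m c]
    apply (subst ennreal_SUP_add_left[symmetric])
     apply (rule ne)
    apply (rule SUP_least)
    apply (subst ennreal_SUP_add_right)
     apply (rule ne)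
    apply (rule SUP_least)
    by auto
qed



lemma interval_sep:
  fixes J K :: "real set"
  assumes "is_interval J" "is_interval K" "J \<inter> K = {}" "pJ \<in> J" "pK \<in> K" "pJ < pK"
    "z \<in> J" "w \<in> K"
  shows "z < w"
proof (rule ccontr)
  assume "\<not> z < w"
  then have wz: "w \<le> z" by simp
  show False
  proof (cases "w \<le> pJ")
    case True
    have "pJ \<le> pK" using assms(6) by simp
    then have "pJ \<in> K" using assms(2,5,8) True unfolding is_interval_1 by blast
    then show False using assms(3,4) by blast
  next
    case False
    then have "pJ \<le> w" by simp
    then have "w \<in> J" using assms(1,4,7) wz unfolding is_interval_1 by blast
    then show False using assms(3,8) by blast
  qed
qed

lemma varOn_sum_intervals:
  fixes F :: "real set set"
  assumes "finite F" "disjoint F" "\<forall>J\<in>F. is_interval J \<and> J \<noteq> {} \<and> J \<subseteq> {a..c}"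
  shows "(\<Sum>J\<in>F. varOn g (Inf J) (Sup J)) \<le> varOn g a c"
proof -
  define p where "p J = (SOME x. x \<in> J)" for J :: "real set"
  have pJ: "J \<noteq> {} \<Longrightarrow> p J \<in> J" for J unfolding p_def by (simp add: some_in_eq)
  have "\<forall>c. disjoint F \<and> (\<forall>J\<in>F. is_interval J \<and> J \<noteq> {} \<and> J \<subseteq> {a..c}) \<longrightarrow>
       (\<Sum>J\<in>F. varOn g (Inf J) (Sup J)) \<le> varOn g a c"
    using assms(1)
  proof (induction F rule: finite_ranking_induct[where f = p])
    case empty
    then show ?case by simp
  next
    case (insert K S)
    show ?case
    proof (cases "K \<in> S")
      case True
      then show ?thesis using insert.IH by (simp add: insert_absorb)
    next
      case KS: False
      show ?thesis
      proof (intro allI impI)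
        fix c
        assume H: "disjoint (insert K S) \<and> (\<forall>J\<in>insert K S. is_interval J \<and> J \<noteq> {} \<and> J \<subseteq> {a..c})"
        have dS: "disjoint S" using H unfolding disjoint_def by blast
        have KJ: "K \<inter> J = {}" if "J \<in> S" for J
          using H that KS unfolding disjoint_def disjnt_def pairwise_def by (metis insertCI)
        have Kprops: "is_interval K" "K \<noteq> {}" "K \<subseteq> {a..c}" using H by auto
        have bddK: "bdd_below K" "bdd_above K" using Kprops(3) by (meson bdd_above_Icc bdd_below_Icc bdd_above_mono bdd_below_mono)+
        define m where "m = Inf K"
        have am: "a \<le> m" unfolding m_def using Kprops by (intro cInf_greatest) auto
        have mc: "m \<le> c"
        proof -
          have "Inf K \<le> p K" using bddK pJ[OF Kprops(2)] by (intro cInf_lower)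
          moreover have "p K \<le> c" using Kprops pJ[OF Kprops(2)] by auto
          ultimately show ?thesis unfolding m_def by simp
        qed
        have supK: "Sup K \<le> c" using Kprops by (intro cSup_least) auto
        have lt: "z < w" if "J \<in> S" "z \<in> J" "w \<in> K" for J z w
        proof -
          have J: "is_interval J" "J \<noteq> {}" using H that by auto
          have "p J \<le> p K" using insert.hyps(2) that(1) .
          moreover have "p J \<noteq> p K" using pJ[OF J(2)] pJ[OF Kprops(2)] KJ[OF that(1)] by auto
          ultimately have "p J < p K" by simp
          then show ?thesis
            using KJ[OF that(1)] interval_sep[OF J(1) Kprops(1) _ pJ[OF J(2)] pJ[OF Kprops(2)] _ that(2,3)]
            by (simp add: Int_commute)
        qed
        have Ssub: "\<forall>J\<in>S. is_interval J \<and> J \<noteq> {} \<and> J \<subseteq> {a..m}"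
        proof
          fix J assume J: "J \<in> S"
          have "z \<le> m" if "z \<in> J" for z
            unfolding m_def using Kprops lt[OF J that] by (intro cInf_greatest) (auto intro: less_imp_le)
          moreover have "J \<subseteq> {a..c}" "is_interval J" "J \<noteq> {}" using H J by auto
          ultimately show "is_interval J \<and> J \<noteq> {} \<and> J \<subseteq> {a..m}" by auto
        qed
        have IH: "(\<Sum>J\<in>S. varOn g (Inf J) (Sup J)) \<le> varOn g a m"
          using insert.IH[rule_format, of m] dS Ssub by simp
        have "(\<Sum>J\<in>insert K S. varOn g (Inf J) (Sup J)) = varOn g (Inf K) (Sup K) + (\<Sum>J\<in>S. varOn g (Inf J) (Sup J))"
          using insert.hyps(1) KS by simp
        also have "\<dots> \<le> varOn g m c + varOn g a m"
          by (intro add_mono IH varOn_mono) (auto simp: m_def supK)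
        also have "\<dots> \<le> varOn g a c" using varOn_split[of m a c g] am mc by (simp add: add.commute)
        finally show "(\<Sum>J\<in>insert K S. varOn g (Inf J) (Sup J)) \<le> varOn g a c" .
      qed
    qed
  qed
  from this[rule_format, of c] show ?thesis using assms(2,3) by blast
qed



lemma ennreal_mult_INF_ge:
  assumes "G \<noteq> {}" "\<And>g. g \<in> G \<Longrightarrow> X \<le> ennreal c * v g"
  shows "X \<le> ennreal c * (INF g\<in>G. v g)"
proof (cases "c > 0")
  case False
  then have "ennreal c = 0" by (simp add: ennreal_eq_0_iff)
  moreover obtain g where "g \<in> G" using assms(1) by blast
  ultimately show ?thesis using assms(2) by auto
next
  case True
  have cc: "ennreal c * ennreal (1/c) = 1" using True by (simp add: ennreal_mult[symmetric])
  have "X * ennreal (1/c) \<le> v g" if "g \<in> G" for g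
  proof -
    have "X * ennreal (1/c) \<le> ennreal c * v g * ennreal (1/c)"
      using assms(2)[OF that] by (rule mult_right_mono) simp
    also have "\<dots> = v g * (ennreal c * ennreal (1/c))" by (simp add: ac_simps)
    also have "\<dots> = v g" using cc by simp
    finally show ?thesis .
  qed
  then have "X * ennreal (1/c) \<le> (INF g\<in>G. v g)" by (rule INF_greatest)
  then have "ennreal c * (X * ennreal (1/c)) \<le> ennreal c * (INF g\<in>G. v g)" by (rule mult_left_mono) simp
  moreover have "ennreal c * (X * ennreal (1/c)) = X * (ennreal c * ennreal (1/c))" by (simp add: ac_simps)
  ultimately show ?thesis using cc by simp
qed

context
  fixes \<eta> :: "real set set"
  assumes eta: "interval_partition01 \<eta>"
begin

lemma eta_finite: "finite \<eta>" using eta unfolding interval_partition01_def by auto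

lemma eta_sub: "J \<in> \<eta> \<Longrightarrow> J \<subseteq> {0..1}" using eta unfolding interval_partition01_def by auto

lemma eta_int: "J \<in> \<eta> \<Longrightarrow> is_interval J" using eta unfolding interval_partition01_def by auto

lemma eta_ne: "J \<in> \<eta> \<Longrightarrow> J \<noteq> {}" using eta unfolding interval_partition01_def by auto

lemma eta_disj: "J \<in> \<eta> \<Longrightarrow> K \<in> \<eta> \<Longrightarrow> J \<noteq> K \<Longrightarrow> J \<inter> K = {}"
  using eta unfolding interval_partition01_def disjoint_def by auto

lemma eta_cover: "x \<in> {0..1} \<Longrightarrow> \<exists>J\<in>\<eta>. x \<in> J"
  using eta unfolding interval_partition01_def by auto

lemma eta_borel: "J \<in> \<eta> \<Longrightarrow> J \<in> sets borel"
  using eta_int real_interval_borel_measurable by blast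

lemma eta_leb: "J \<in> \<eta> \<Longrightarrow> J \<in> sets lebesgue"
  using eta_borel by auto

lemma eta_lamI: "J \<in> \<eta> \<Longrightarrow> J \<in> sets lamI"
  using eta_leb eta_sub by (simp add: sets_restrict_space_iff)

lemma eta_sum_ind: 
  assumes "x \<in> {0..1}"
  shows "(\<Sum>J\<in>\<eta>. indicator J x :: 'a::{comm_monoid_add,zero_neq_one}) = 1"
proof -
  obtain J where J: "J \<in> \<eta>" "x \<in> J" using eta_cover assms by blast
  have "(\<Sum>K\<in>\<eta>. indicator K x :: 'a) = indicator J x + (\<Sum>K\<in>\<eta>-{J}. indicator K x)"
    using J eta_finite by (simp add: sum.remove)
  also have "(\<Sum>K\<in>\<eta>-{J}. indicator K x :: 'a) = 0"
    using J eta_disj by (intro sum.neutral) (auto simp: indicator_def)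
  finally show ?thesis using J by simp
qed

lemma eta_Pi_eq:
  assumes "J \<in> \<eta>" "x \<in> J"
  shows "Pi_eta \<eta> u x = (LINT y:J|lebesgue. u y) / measure lebesgue J"
proof -
  have "Pi_eta \<eta> u x = indicator J x * ((LINT y:J|lebesgue. u y) / measure lebesgue J)
     + (\<Sum>K\<in>\<eta>-{J}. indicator K x * ((LINT y:K|lebesgue. u y) / measure lebesgue K))"
    unfolding Pi_eta_def using assms eta_finite by (simp add: sum.remove)
  also have "(\<Sum>K\<in>\<eta>-{J}. indicator K x * ((LINT y:K|lebesgue. u y) / measure lebesgue K)) = 0"
    using assms eta_disj by (intro sum.neutral) (auto simp: indicator_def)
  finally show ?thesis using assms by simp
qed

lemma mesh_ge: "J \<in> \<eta> \<Longrightarrow> measure lebesgue J \<le> mesh \<eta>"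
  unfolding mesh_def using eta_finite eta_borel by (auto intro!: Max_ge)

lemma mesh_nonneg: "0 \<le> mesh \<eta>"
proof -
  obtain J where "J \<in> \<eta>" using eta_cover[of 0] by auto
  then show ?thesis using mesh_ge[of J] by (meson measure_nonneg order_trans)
qed

lemma space_lamI: "space lamI = {0..1}" by (simp add: space_restrict_space)

lemma emeasure_lamI: "A \<subseteq> {0..1} \<Longrightarrow> A \<in> sets lebesgue \<Longrightarrow> emeasure lamI A = emeasure lebesgue A"
  by (simp add: emeasure_restrict_space)

lemma nn_decomp:
  assumes "f \<in> borel_measurable lamI"
  shows "(\<integral>\<^sup>+x. f x \<partial>lamI) = (\<Sum>J\<in>\<eta>. \<integral>\<^sup>+x. indicator J x * f x \<partial>lamI)"
proof -
  have "(\<integral>\<^sup>+x. f x \<partial>lamI) = (\<integral>\<^sup>+x. (\<Sum>J\<in>\<eta>. indicator J x * f x) \<partial>lamI)"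
  proof (rule nn_integral_cong)
    fix x assume "x \<in> space lamI"
    then have "(\<Sum>J\<in>\<eta>. indicator J x :: ennreal) = 1" using eta_sum_ind space_lamI by auto
    then show "f x = (\<Sum>J\<in>\<eta>. indicator J x * f x)" by (simp add: sum_distrib_right[symmetric])
  qed
  also have "\<dots> = (\<Sum>J\<in>\<eta>. \<integral>\<^sup>+x. indicator J x * f x \<partial>lamI)"
    using assms eta_lamI by (intro nn_integral_sum) auto
  finally show ?thesis .
qed

end



lemma I_leb: "{0..1::real} \<in> sets lebesgue" by simp

lemma LINT_lamI: fixes u :: "real \<Rightarrow> real" shows "J \<subseteq> {0..1} \<Longrightarrow> (LINT y:J|lebesgue. u y) = (\<integral> y. indicator J y * u y \<partial>lamI)"
  unfolding set_lebesgue_integral_def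
  by (subst integral_restrict_space) (auto intro!: Bochner_Integration.integral_cong simp: indicator_def)

lemma finite_lamI: "finite_measure lamI"
  by (rule finite_measure_lebesgue_on) simp

lemma emeasure_lamI_eq: "A \<subseteq> {0..1} \<Longrightarrow> A \<in> sets lebesgue \<Longrightarrow> emeasure lamI A = ennreal (measure lebesgue A)"
proof -
  assume A: "A \<subseteq> {0..1}" "A \<in> sets lebesgue"
  have "emeasure lebesgue A \<le> emeasure lebesgue {0..1::real}" using A by (intro emeasure_mono) auto
  then have "emeasure lebesgue A \<noteq> top" by (auto simp: top_unique)
  have "emeasure lamI A = emeasure lebesgue A" by (rule emeasure_restrict_space) (use A in auto)
  also have "\<dots> = ennreal (measure lebesgue A)" using \<open>emeasure lebesgue A \<noteq> top\<close> by (rule emeasure_eq_ennreal_measure)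
  finally show ?thesis .
qed

lemma measure_lamI_eq: "A \<subseteq> {0..1} \<Longrightarrow> A \<in> sets lebesgue \<Longrightarrow> measure lamI A = measure lebesgue A"
  by (simp add: measure_restrict_space)

lemma integrable_ind_lamI:
  fixes u :: "real \<Rightarrow> real"
  assumes "integrable lamI u" "J \<in> sets lamI"
  shows "integrable lamI (\<lambda>y. indicator J y * u y)"
  using integrable_mult_indicator[OF assms(2) assms(1)] by simp

lemma const_integrable_lamI: "integrable lamI (\<lambda>x. c::real)"
  using finite_measure.integrable_const[OF finite_lamI] .

context
  fixes \<eta> :: "real set set"
  assumes eta: "interval_partition01 \<eta>"
begin

lemma Pi_meas: "Pi_eta \<eta> u \<in> borel_measurable lamI"
proof -
  have "(\<lambda>x. \<Sum>J\<in>\<eta>. indicator J x * ((LINT y:J|lebesgue. u y) / measure lebesgue J)) \<in> borel_measurable lamI"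
    using eta_lamI[OF eta] by (intro borel_measurable_sum borel_measurable_times) auto
  then show ?thesis unfolding Pi_eta_def[abs_def] by simp
qed

lemma Pi_integrable: "integrable lamI (Pi_eta \<eta> u)"
proof -
  have "integrable lamI (\<lambda>x. \<Sum>J\<in>\<eta>. indicator J x * ((LINT y:J|lebesgue. u y) / measure lebesgue J))"
  proof (intro Bochner_Integration.integrable_sum Bochner_Integration.integrable_mult_left)
    fix J assume "J \<in> \<eta>"
    then have "J \<in> sets lamI" using eta_lamI[OF eta] by simp
    then show "integrable lamI (indicator J :: real \<Rightarrow> real)"
      using finite_measure.emeasure_finite[OF finite_lamI] by (simp add: less_top)
  qed
  then show ?thesis unfolding Pi_eta_def[abs_def] by simp
qed

lemma avg_bound:
  fixes u :: "real \<Rightarrow> real"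
  assumes u: "integrable lamI u" and J: "J \<in> \<eta>"
  shows "ennreal (measure lebesgue J * \<bar>(LINT y:J|lebesgue. u y) / measure lebesgue J\<bar>)
          \<le> (\<integral>\<^sup>+x. indicator J x * ennreal \<bar>u x\<bar> \<partial>lamI)"
proof (cases "measure lebesgue J = 0")
  case True then show ?thesis by simp
next
  case False
  have mJ: "measure lebesgue J > 0" using False measure_nonneg[of lebesgue J] by linarith
  have Jl: "J \<in> sets lamI" using eta_lamI[OF eta J] .
  have "measure lebesgue J * \<bar>(LINT y:J|lebesgue. u y) / measure lebesgue J\<bar> = \<bar>LINT y:J|lebesgue. u y\<bar>"
    using mJ by (simp add: abs_div)
  also have "\<dots> = \<bar>\<integral> y. indicator J y * u y \<partial>lamI\<bar>" using LINT_lamI eta_sub[OF eta J] by simp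
  also have "\<dots> \<le> (\<integral> y. \<bar>indicator J y * u y\<bar> \<partial>lamI)" by (rule integral_abs_bound)
  also have "\<dots> = (\<integral> y. indicator J y * \<bar>u y\<bar> \<partial>lamI)"
    by (intro Bochner_Integration.integral_cong) (auto simp: indicator_def)
  finally have 1: "measure lebesgue J * \<bar>(LINT y:J|lebesgue. u y) / measure lebesgue J\<bar> \<le> (\<integral> y. indicator J y * \<bar>u y\<bar> \<partial>lamI)" .
  have int: "integrable lamI (\<lambda>y. indicator J y * \<bar>u y\<bar>)"
    using integrable_ind_lamI[OF integrable_abs[OF u] Jl] .
  have "ennreal (\<integral> y. indicator J y * \<bar>u y\<bar> \<partial>lamI) = (\<integral>\<^sup>+y. ennreal (indicator J y * \<bar>u y\<bar>) \<partial>lamI)"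
    using int by (subst nn_integral_eq_integral) auto
  also have "\<dots> = (\<integral>\<^sup>+x. indicator J x * ennreal \<bar>u x\<bar> \<partial>lamI)"
    by (intro nn_integral_cong) (auto simp: indicator_def)
  finally show ?thesis using 1 ennreal_leI by (metis)
qed

lemma Pi_contract:
  fixes u :: "real \<Rightarrow> real"
  assumes u: "integrable lamI u"
  shows "L1norm (Pi_eta \<eta> u) \<le> L1norm u"
proof -
  have um: "u \<in> borel_measurable lamI" using u by auto
  have "L1norm (Pi_eta \<eta> u) = (\<Sum>J\<in>\<eta>. \<integral>\<^sup>+x. indicator J x * ennreal \<bar>Pi_eta \<eta> u x\<bar> \<partial>lamI)"
    unfolding L1norm_def using Pi_meas by (intro nn_decomp[OF eta]) auto
  also have "\<dots> \<le> (\<Sum>J\<in>\<eta>. \<integral>\<^sup>+x. indicator J x * ennreal \<bar>u x\<bar> \<partial>lamI)"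
  proof (rule sum_mono)
    fix J assume J: "J \<in> \<eta>"
    define c where "c = (LINT y:J|lebesgue. u y) / measure lebesgue J"
    have "(\<integral>\<^sup>+x. indicator J x * ennreal \<bar>Pi_eta \<eta> u x\<bar> \<partial>lamI) = (\<integral>\<^sup>+x. ennreal \<bar>c\<bar> * indicator J x \<partial>lamI)"
      using eta_Pi_eq[OF eta J] unfolding c_def by (intro nn_integral_cong) (auto simp: indicator_def)
    also have "\<dots> = ennreal \<bar>c\<bar> * emeasure lamI J" using eta_lamI[OF eta J] by (simp add: nn_integral_cmult_indicator)
    also have "\<dots> = ennreal (measure lebesgue J * \<bar>c\<bar>)"
      using emeasure_lamI_eq[OF eta_sub[OF eta J] eta_leb[OF eta J]] by (simp add: ennreal_mult mult.commute)
    also have "\<dots> \<le> (\<integral>\<^sup>+x. indicator J x * ennreal \<bar>u x\<bar> \<partial>lamI)"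
      unfolding c_def by (rule avg_bound[OF u J])
    finally show "(\<integral>\<^sup>+x. indicator J x * ennreal \<bar>Pi_eta \<eta> u x\<bar> \<partial>lamI) \<le> (\<integral>\<^sup>+x. indicator J x * ennreal \<bar>u x\<bar> \<partial>lamI)" .
  qed
  also have "\<dots> = L1norm u"
    unfolding L1norm_def using um by (intro nn_decomp[OF eta, symmetric]) auto
  finally show ?thesis .
qed

lemma Pi_diff:
  fixes a b :: "real \<Rightarrow> real"
  assumes a: "integrable lamI a" and b: "integrable lamI b"
  shows "Pi_eta \<eta> a x - Pi_eta \<eta> b x = Pi_eta \<eta> (\<lambda>y. a y - b y) x"
proof -
  have eq: "(LINT y:J|lebesgue. a y - b y) = (LINT y:J|lebesgue. a y) - (LINT y:J|lebesgue. b y)" if J: "J \<in> \<eta>" for J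
  proof -
    have Jl: "J \<in> sets lamI" using eta_lamI[OF eta J] .
    have "(\<integral> y. indicator J y * (a y - b y) \<partial>lamI) = (\<integral> y. indicator J y * a y - indicator J y * b y \<partial>lamI)"
      by (simp add: algebra_simps)
    also have "\<dots> = (\<integral> y. indicator J y * a y \<partial>lamI) - (\<integral> y. indicator J y * b y \<partial>lamI)"
      using integrable_ind_lamI[OF a Jl] integrable_ind_lamI[OF b Jl] by (rule Bochner_Integration.integral_diff)
    finally show ?thesis using LINT_lamI eta_sub[OF eta J] by simp
  qed
  show ?thesis unfolding Pi_eta_def sum_subtractf[symmetric]
  proof (rule sum.cong[OF refl])
    fix J assume J: "J \<in> \<eta>"
    show "indicator J x * ((LINT y:J|lebesgue. a y) / measure lebesgue J) - indicator J x * ((LINT y:J|lebesgue. b y) / measure lebesgue J)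
      = indicator J x * ((LINT y:J|lebesgue. a y - b y) / measure lebesgue J)"
      unfolding eq[OF J] by (simp add: diff_divide_distrib right_diff_distrib)
  qed
qed

end



lemma absdiv_helper: "(m::real) > 0 \<Longrightarrow> \<bar>A / m - b\<bar> * m = \<bar>A - b * m\<bar>"
proof -
  assume m: "m > 0"
  have "(A / m - b) * m = A - b * m" using m by (simp add: field_simps)
  then show ?thesis using m by (metis abs_mult abs_of_pos)
qed

context
  fixes \<eta> :: "real set set"
  assumes eta: "interval_partition01 \<eta>"
begin

lemma perJ:
  fixes h g :: "real \<Rightarrow> real"
  assumes h: "integrable lamI h" and gh: "AE x in lamI. g x = h x" and fin: "var01 g < top"
    and J: "J \<in> \<eta>"
  shows "(\<integral>\<^sup>+x. indicator J x * ennreal \<bar>Pi_eta \<eta> h x - h x\<bar> \<partial>lamI)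
          \<le> ennreal (measure lebesgue J) * varOn g (Inf J) (Sup J)"
proof (cases "measure lebesgue J = 0")
  case True
  have "(\<integral>\<^sup>+x. indicator J x * ennreal \<bar>Pi_eta \<eta> h x - h x\<bar> \<partial>lamI) \<le> (\<integral>\<^sup>+x. top * indicator J x \<partial>lamI)"
    by (intro nn_integral_mono) (auto simp: indicator_def)
  also have "\<dots> = top * emeasure lamI J" using eta_lamI[OF eta J] by (simp add: nn_integral_cmult_indicator)
  also have "\<dots> = 0" using emeasure_lamI_eq[OF eta_sub[OF eta J] eta_leb[OF eta J]] True by simp
  finally show ?thesis by simp
next
  case False
  define mJ where "mJ = measure lebesgue J"
  have mJ: "mJ > 0" using False measure_nonneg[of lebesgue J] unfolding mJ_def by linarith
  define V where "V = varOn g (Inf J) (Sup J)"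
  have Jsub: "J \<subseteq> {0..1}" using eta_sub[OF eta J] .
  have Jl: "J \<in> sets lamI" using eta_lamI[OF eta J] .
  have bb: "bdd_below J" "bdd_above J" using Jsub by (meson bdd_above_Icc bdd_below_Icc bdd_above_mono bdd_below_mono)+
  have Jne: "J \<noteq> {}" using eta_ne[OF eta J] .
  have inJ: "x \<in> {Inf J..Sup J}" if "x \<in> J" for x using bb that by (auto intro: cInf_lower cSup_upper)
  have "V \<le> varOn g 0 1"
    unfolding V_def using Jsub Jne by (intro varOn_mono) (auto intro!: cInf_greatest cSup_least)
  then have "V < top" using fin var01_varOn by (metis le_less_trans)
  then obtain W where VW: "V = ennreal W" "0 \<le> W" by (cases V rule: ennreal_cases) auto
  have gb: "\<bar>g y - g x\<bar> \<le> W" if "x \<in> J" "y \<in> J" for x y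
  proof -
    have "ennreal \<bar>g y - g x\<bar> \<le> V" unfolding V_def using inJ that by (intro varOn_pair) auto
    then show ?thesis using VW by (simp add: ennreal_le_iff)
  qed
  have ptw: "\<bar>Pi_eta \<eta> h x - h x\<bar> \<le> W" if x: "x \<in> J" "g x = h x" for x
  proof -
    have c: "Pi_eta \<eta> h x = (\<integral> y. indicator J y * h y \<partial>lamI) / mJ"
      using eta_Pi_eq[OF eta J x(1)] LINT_lamI[OF Jsub] unfolding mJ_def by simp
    have i1: "integrable lamI (\<lambda>y. indicator J y * h y)" using integrable_ind_lamI[OF h Jl] .
    have i2: "integrable lamI (\<lambda>y. indicator J y * h x)"
      using integrable_ind_lamI[OF const_integrable_lamI Jl] .
    have i3: "integrable lamI (\<lambda>y. indicator J y * \<bar>h y - h x\<bar>)"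
      using integrable_ind_lamI[OF integrable_abs[OF Bochner_Integration.integrable_diff[OF h const_integrable_lamI]] Jl] .
    have i4: "integrable lamI (\<lambda>y. indicator J y * W)"
      using integrable_ind_lamI[OF const_integrable_lamI Jl] .
    have mI: "measure lamI J = mJ" unfolding mJ_def using measure_lamI_eq[OF Jsub eta_leb[OF eta J]] .
    have e2: "(\<integral> y. indicator J y * h x \<partial>lamI) = h x * mJ"
      using Jl mI Jsub by (simp add: mult.commute Int_absorb2)
    have e4: "(\<integral> y. indicator J y * W \<partial>lamI) = W * mJ"
      using Jl mI Jsub by (simp add: mult.commute Int_absorb2)
    have "\<bar>Pi_eta \<eta> h x - h x\<bar> * mJ = \<bar>(\<integral> y. indicator J y * h y \<partial>lamI) - h x * mJ\<bar>"
      using mJ unfolding c by (rule absdiv_helper)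
    also have "\<dots> = \<bar>\<integral> y. indicator J y * h y - indicator J y * h x \<partial>lamI\<bar>"
      by (subst Bochner_Integration.integral_diff[OF i1 i2]) (simp only: e2)
    also have "\<dots> \<le> (\<integral> y. \<bar>indicator J y * h y - indicator J y * h x\<bar> \<partial>lamI)"
      by (rule integral_abs_bound)
    also have "\<dots> = (\<integral> y. indicator J y * \<bar>h y - h x\<bar> \<partial>lamI)"
      by (intro Bochner_Integration.integral_cong) (auto simp: indicator_def)
    also have "\<dots> \<le> (\<integral> y. indicator J y * W \<partial>lamI)"
    proof (rule integral_mono_AE[OF i3 i4])
      show "AE y in lamI. indicator J y * \<bar>h y - h x\<bar> \<le> indicator J y * W"
        using gh
      proof eventually_elim
        case (elim y)
        show ?case using gb[OF x(1), of y] elim x(2) VW(2) by (auto simp: indicator_def)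
      qed
    qed
    also have "\<dots> = W * mJ" by (rule e4)
    finally show ?thesis using mJ by simp
  qed
  have "(\<integral>\<^sup>+x. indicator J x * ennreal \<bar>Pi_eta \<eta> h x - h x\<bar> \<partial>lamI) \<le> (\<integral>\<^sup>+x. ennreal W * indicator J x \<partial>lamI)"
  proof (rule nn_integral_mono_AE)
    show "AE x in lamI. indicator J x * ennreal \<bar>Pi_eta \<eta> h x - h x\<bar> \<le> ennreal W * indicator J x"
      using gh
    proof eventually_elim
      case (elim x)
      show ?case using ptw[of x] elim by (auto simp: indicator_def ennreal_leI)
    qed
  qed
  also have "\<dots> = ennreal W * emeasure lamI J" using Jl by (simp add: nn_integral_cmult_indicator)
  also have "\<dots> = ennreal (measure lebesgue J) * V"
    using emeasure_lamI_eq[OF Jsub eta_leb[OF eta J]] VW by (simp add: mult.commute)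
  finally show ?thesis unfolding V_def .
qed

lemma Pi_var_bound:
  fixes h g :: "real \<Rightarrow> real"
  assumes h: "integrable lamI h" and gh: "AE x in lamI. g x = h x" and fin: "var01 g < top"
  shows "L1norm (\<lambda>x. Pi_eta \<eta> h x - h x) \<le> ennreal (mesh \<eta>) * var01 g"
proof -
  have hm: "h \<in> borel_measurable lamI" using h by auto
  have "L1norm (\<lambda>x. Pi_eta \<eta> h x - h x) = (\<Sum>J\<in>\<eta>. \<integral>\<^sup>+x. indicator J x * ennreal \<bar>Pi_eta \<eta> h x - h x\<bar> \<partial>lamI)"
    unfolding L1norm_def using Pi_meas[OF eta] hm by (intro nn_decomp[OF eta]) auto
  also have "\<dots> \<le> (\<Sum>J\<in>\<eta>. ennreal (mesh \<eta>) * varOn g (Inf J) (Sup J))"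
  proof (rule sum_mono)
    fix J assume J: "J \<in> \<eta>"
    have "ennreal (measure lebesgue J) \<le> ennreal (mesh \<eta>)" using mesh_ge[OF eta J] by (rule ennreal_leI)
    then have "ennreal (measure lebesgue J) * varOn g (Inf J) (Sup J) \<le> ennreal (mesh \<eta>) * varOn g (Inf J) (Sup J)"
      by (rule mult_right_mono) simp
    then show "(\<integral>\<^sup>+x. indicator J x * ennreal \<bar>Pi_eta \<eta> h x - h x\<bar> \<partial>lamI) \<le> ennreal (mesh \<eta>) * varOn g (Inf J) (Sup J)"
      using perJ[OF h gh fin J] by (rule order_trans[rotated])
  qed
  also have "\<dots> = ennreal (mesh \<eta>) * (\<Sum>J\<in>\<eta>. varOn g (Inf J) (Sup J))" by (simp add: sum_distrib_left)
  also have "\<dots> \<le> ennreal (mesh \<eta>) * varOn g 0 1"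
  proof (rule mult_left_mono)
    show "(\<Sum>J\<in>\<eta>. varOn g (Inf J) (Sup J)) \<le> varOn g 0 1"
      using eta unfolding interval_partition01_def by (intro varOn_sum_intervals) auto
  qed simp
  finally show ?thesis unfolding var01_varOn .
qed

lemma Pi_Vvar_bound:
  fixes h :: "real \<Rightarrow> real"
  assumes h: "integrable lamI h" and fin: "Vvar h < top"
  shows "L1norm (\<lambda>x. Pi_eta \<eta> h x - h x) \<le> ennreal (mesh \<eta>) * Vvar h"
proof -
  let ?G = "{g. AE x in lamI. g x = h x}"
  let ?G' = "{g \<in> ?G. var01 g < top}"
  have ne: "?G' \<noteq> {}" using fin unfolding Vvar_def by (auto simp: INF_less_iff)
  have "L1norm (\<lambda>x. Pi_eta \<eta> h x - h x) \<le> ennreal (mesh \<eta>) * (INF g\<in>?G'. var01 g)"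
    by (rule ennreal_mult_INF_ge[OF ne]) (auto intro: Pi_var_bound[OF h])
  also have "(INF g\<in>?G'. var01 g) \<le> Vvar h"
    unfolding Vvar_def
  proof (rule INF_greatest)
    fix g assume g: "g \<in> ?G"
    show "(INF g\<in>?G'. var01 g) \<le> var01 g"
    proof (cases "var01 g < top")
      case True then show ?thesis using g by (intro INF_lower) auto
    next
      case False then show ?thesis by (simp add: top_unique not_less)
    qed
  qed
  then have "ennreal (mesh \<eta>) * (INF g\<in>?G'. var01 g) \<le> ennreal (mesh \<eta>) * Vvar h" by (rule mult_left_mono) simp
  finally show ?thesis .
qed

end



lemma preimage_sets:
  assumes T: "nonsingular01 T" and A: "A \<in> sets lamI"
  shows "T -` A \<inter> {0..1} \<in> sets lamI"
proof -
  have Tm: "T \<in> borel_measurable lamI" and TI: "\<And>x. x \<in> {0..1} \<Longrightarrow> T x \<in> {0..1}"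
    and Tn: "\<And>Z. Z \<in> null_sets lamI \<Longrightarrow> T -` Z \<inter> {0..1} \<in> null_sets lamI"
    using T unfolding nonsingular01_def by auto
  have Al: "A \<in> sets lebesgue" "A \<subseteq> {0..1}" using A by (auto simp: sets_restrict_space_iff)
  from Al(1) obtain S N N' where SN: "A = S \<union> N" "N \<subseteq> N'" "N' \<in> null_sets lborel" "S \<in> sets lborel"
    by (rule sets_completionE)
  have 1: "T -` S \<inter> {0..1} \<in> sets lamI"
    using measurable_sets[OF Tm, of S] SN(4) space_lamI by simp
  define Z where "Z = N' \<inter> {0..1}"
  have Zleb: "Z \<in> null_sets lebesgue"
    using null_sets_completionI[OF SN(3)] unfolding Z_def by (rule null_sets_completion_subset[rotated]) auto
  have Zl: "Z \<in> null_sets lamI" using Zleb by (subst null_sets_restrict_space) (auto simp: Z_def)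
  have sub: "T -` N \<inter> {0..1} \<subseteq> T -` Z \<inter> {0..1}" using SN(2) TI unfolding Z_def by auto
  have "T -` Z \<inter> {0..1} \<in> null_sets lebesgue" using Tn[OF Zl] by (subst (asm) null_sets_restrict_space) auto
  then have "T -` N \<inter> {0..1} \<in> null_sets lebesgue" using sub by (rule null_sets_completion_subset[rotated])
  then have 2: "T -` N \<inter> {0..1} \<in> sets lamI" by (auto simp: sets_restrict_space_iff)
  have "T -` A \<inter> {0..1} = (T -` S \<inter> {0..1}) \<union> (T -` N \<inter> {0..1})" using SN(1) by auto
  then show ?thesis using 1 2 by simp
qed

lemma PF_set:
  assumes T: "nonsingular01 T" and P: "is_PF T P" and f: "integrable lamI f" "integrable lamI g"
    and A: "A \<in> sets lamI"
  shows "(\<integral>x. indicator A x * (P f x - P g x) \<partial>lamI) = (\<integral>x. indicator (T -` A \<inter> {0..1}) x * (f x - g x) \<partial>lamI)"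
proof -
  let ?S = "T -` A \<inter> {0..1}"
  have S: "?S \<in> sets lamI" by (rule preimage_sets[OF T A])
  have Pf: "integrable lamI (P f)" "integrable lamI (P g)" using P f unfolding is_PF_def by auto
  have eqf: "(\<integral>x. indicator A x * P f x \<partial>lamI) = (\<integral>x. indicator ?S x * f x \<partial>lamI)"
    using P f(1) A unfolding is_PF_def set_lebesgue_integral_def by auto
  have eqg: "(\<integral>x. indicator A x * P g x \<partial>lamI) = (\<integral>x. indicator ?S x * g x \<partial>lamI)"
    using P f(2) A unfolding is_PF_def set_lebesgue_integral_def by auto
  have "(\<integral>x. indicator A x * (P f x - P g x) \<partial>lamI) = (\<integral>x. indicator A x * P f x - indicator A x * P g x \<partial>lamI)"
    by (simp add: algebra_simps)
  also have "\<dots> = (\<integral>x. indicator A x * P f x \<partial>lamI) - (\<integral>x. indicator A x * P g x \<partial>lamI)"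
    by (rule Bochner_Integration.integral_diff[OF integrable_ind_lamI[OF Pf(1) A] integrable_ind_lamI[OF Pf(2) A]])
  also have "\<dots> = (\<integral>x. indicator ?S x * f x \<partial>lamI) - (\<integral>x. indicator ?S x * g x \<partial>lamI)" using eqf eqg by simp
  also have "\<dots> = (\<integral>x. indicator ?S x * f x - indicator ?S x * g x \<partial>lamI)"
    by (rule Bochner_Integration.integral_diff[OF integrable_ind_lamI[OF f(1) S] integrable_ind_lamI[OF f(2) S], symmetric])
  also have "\<dots> = (\<integral>x. indicator ?S x * (f x - g x) \<partial>lamI)" by (simp add: algebra_simps)
  finally show ?thesis .
qed

lemma PF_contract:
  fixes f g :: "real \<Rightarrow> real"
  assumes T: "nonsingular01 T" and P: "is_PF T P" and f: "integrable lamI f" and g: "integrable lamI g"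
  shows "L1norm (\<lambda>x. P f x - P g x) \<le> L1norm (\<lambda>x. f x - g x)"
proof -
  define u where "u x = P f x - P g x" for x
  define d where "d x = f x - g x" for x
  have Pf: "integrable lamI (P f)" "integrable lamI (P g)" using P f g unfolding is_PF_def by auto
  have ui: "integrable lamI u" unfolding u_def using Pf by auto
  have di: "integrable lamI d" unfolding d_def using f g by auto
  have um[measurable]: "u \<in> borel_measurable lamI" using ui by auto
  define Ap where "Ap = {x \<in> space lamI. 0 \<le> u x}"
  define Am where "Am = {x \<in> space lamI. u x < 0}"
  have Ap: "Ap \<in> sets lamI" unfolding Ap_def by measurable
  have Am: "Am \<in> sets lamI" unfolding Am_def by measurable
  define Sp where "Sp = T -` Ap \<inter> {0..1}"
  define Sm where "Sm = T -` Am \<inter> {0..1}"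
  have Sp: "Sp \<in> sets lamI" unfolding Sp_def by (rule preimage_sets[OF T Ap])
  have Sm: "Sm \<in> sets lamI" unfolding Sm_def by (rule preimage_sets[OF T Am])
  have eP: "(\<integral>x. indicator Ap x * u x \<partial>lamI) = (\<integral>x. indicator Sp x * d x \<partial>lamI)"
    unfolding u_def d_def Sp_def by (rule PF_set[OF T P f g Ap])
  have eM: "(\<integral>x. indicator Am x * u x \<partial>lamI) = (\<integral>x. indicator Sm x * d x \<partial>lamI)"
    unfolding u_def d_def Sm_def by (rule PF_set[OF T P f g Am])
  have "(\<integral>x. \<bar>u x\<bar> \<partial>lamI) = (\<integral>x. indicator Ap x * u x - indicator Am x * u x \<partial>lamI)"
    by (intro Bochner_Integration.integral_cong) (auto simp: Ap_def Am_def indicator_def)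
  also have "\<dots> = (\<integral>x. indicator Ap x * u x \<partial>lamI) - (\<integral>x. indicator Am x * u x \<partial>lamI)"
    by (rule Bochner_Integration.integral_diff[OF integrable_ind_lamI[OF ui Ap] integrable_ind_lamI[OF ui Am]])
  also have "\<dots> = (\<integral>x. indicator Sp x * d x \<partial>lamI) - (\<integral>x. indicator Sm x * d x \<partial>lamI)" using eP eM by simp
  also have "\<dots> \<le> (\<integral>x. indicator Sp x * \<bar>d x\<bar> \<partial>lamI) + (\<integral>x. indicator Sm x * \<bar>d x\<bar> \<partial>lamI)"
  proof -
    have a1: "(\<integral>x. indicator Sp x * d x \<partial>lamI) \<le> (\<integral>x. indicator Sp x * \<bar>d x\<bar> \<partial>lamI)"
      by (rule integral_mono[OF integrable_ind_lamI[OF di Sp] integrable_ind_lamI[OF integrable_abs[OF di] Sp]])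
         (auto simp: indicator_def)
    have "(\<integral>x. - (indicator Sm x * d x) \<partial>lamI) \<le> (\<integral>x. indicator Sm x * \<bar>d x\<bar> \<partial>lamI)"
      by (rule integral_mono[OF integrable_minus[OF integrable_ind_lamI[OF di Sm]] integrable_ind_lamI[OF integrable_abs[OF di] Sm]])
         (auto simp: indicator_def)
    then have a2: "- (\<integral>x. indicator Sm x * d x \<partial>lamI) \<le> (\<integral>x. indicator Sm x * \<bar>d x\<bar> \<partial>lamI)"
      by (simp only: Bochner_Integration.integral_minus)
    show ?thesis using a1 a2 by linarith
  qed
  also have "\<dots> = (\<integral>x. indicator Sp x * \<bar>d x\<bar> + indicator Sm x * \<bar>d x\<bar> \<partial>lamI)"
    by (rule Bochner_Integration.integral_add[OF integrable_ind_lamI[OF integrable_abs[OF di] Sp] integrable_ind_lamI[OF integrable_abs[OF di] Sm], symmetric])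
  also have "\<dots> \<le> (\<integral>x. \<bar>d x\<bar> \<partial>lamI)"
  proof (rule integral_mono)
    show "integrable lamI (\<lambda>x. indicator Sp x * \<bar>d x\<bar> + indicator Sm x * \<bar>d x\<bar>)"
      using integrable_ind_lamI[OF integrable_abs[OF di] Sp] integrable_ind_lamI[OF integrable_abs[OF di] Sm] by auto
    show "integrable lamI (\<lambda>x. \<bar>d x\<bar>)" using di by auto
    have "Sp \<inter> Sm = {}" unfolding Sp_def Sm_def Ap_def Am_def by auto
    then show "indicator Sp x * \<bar>d x\<bar> + indicator Sm x * \<bar>d x\<bar> \<le> \<bar>d x\<bar>" for x
      by (auto simp: indicator_def)
  qed
  finally have main: "(\<integral>x. \<bar>u x\<bar> \<partial>lamI) \<le> (\<integral>x. \<bar>d x\<bar> \<partial>lamI)" .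
  have "L1norm (\<lambda>x. P f x - P g x) = ennreal (\<integral>x. \<bar>u x\<bar> \<partial>lamI)"
    unfolding L1norm_def u_def[symmetric] using ui by (subst nn_integral_eq_integral) auto
  also have "\<dots> \<le> ennreal (\<integral>x. \<bar>d x\<bar> \<partial>lamI)" using main by (rule ennreal_leI)
  also have "\<dots> = L1norm (\<lambda>x. f x - g x)"
    unfolding L1norm_def d_def[symmetric] using di by (subst nn_integral_eq_integral) auto
  finally show ?thesis .
qed



lemma INF_add_ge:
  fixes X c :: ennreal
  assumes ne: "G \<noteq> {}" and b: "\<And>g. g \<in> G \<Longrightarrow> X \<le> c + v g"
  shows "X \<le> c + (INF g\<in>G. v g)"
proof (rule ennreal_le_epsilon)
  fix e :: real assume lt: "c + (INF g\<in>G. v g) < top" and e: "0 < e"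
  have "(INF g\<in>G. v g) \<le> c + (INF g\<in>G. v g)" by (rule add_increasing) simp_all
  then have "(INF g\<in>G. v g) < top" using lt by (rule le_less_trans)
  then have "(INF g\<in>G. v g) \<noteq> top" by (rule less_imp_neq)
  then obtain g where g: "g \<in> G" "v g < (INF g\<in>G. v g) + e"
    using INF_approx_ennreal[OF e refl, of v G] unfolding infinity_ennreal_def by blast
  have "X \<le> c + v g" using b[OF g(1)] .
  also have "\<dots> \<le> c + ((INF g\<in>G. v g) + e)" using g(2) by (intro add_left_mono) simp
  finally show "X \<le> c + (INF g\<in>G. v g) + ennreal e" by (simp add: add.assoc)
qed

lemma L1_triangle:
  fixes a b c :: "real \<Rightarrow> real"
  assumes "a \<in> borel_measurable lamI" "b \<in> borel_measurable lamI" "c \<in> borel_measurable lamI"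
  shows "L1norm (\<lambda>x. a x - c x) \<le> L1norm (\<lambda>x. a x - b x) + L1norm (\<lambda>x. b x - c x)"
proof -
  have "L1norm (\<lambda>x. a x - c x) \<le> (\<integral>\<^sup>+x. ennreal \<bar>a x - b x\<bar> + ennreal \<bar>b x - c x\<bar> \<partial>lamI)"
    unfolding L1norm_def
  proof (rule nn_integral_mono)
    fix x
    have "ennreal \<bar>a x - c x\<bar> \<le> ennreal (\<bar>a x - b x\<bar> + \<bar>b x - c x\<bar>)" by (rule ennreal_leI) linarith
    then show "ennreal \<bar>a x - c x\<bar> \<le> ennreal \<bar>a x - b x\<bar> + ennreal \<bar>b x - c x\<bar>" by (simp add: ennreal_plus)
  qed
  also have "\<dots> = L1norm (\<lambda>x. a x - b x) + L1norm (\<lambda>x. b x - c x)"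
    unfolding L1norm_def using assms by (intro nn_integral_add) auto
  finally show ?thesis .
qed

lemma ess_bound:
  fixes f g :: "real \<Rightarrow> real"
  assumes f: "integrable lamI f" and gf: "AE x in lamI. g x = f x" and x: "x \<in> {0..1}"
  shows "ennreal \<bar>g x\<bar> \<le> L1norm f + var01 g"
proof -
  have sp: "emeasure lamI (space lamI) = 1"
    using emeasure_lamI_eq[of "{0..1}"] space_lamI by simp
  have "ennreal \<bar>g x\<bar> = (\<integral>\<^sup>+y. ennreal \<bar>g x\<bar> \<partial>lamI)" using sp by simp
  also have "\<dots> \<le> (\<integral>\<^sup>+y. ennreal \<bar>f y\<bar> + var01 g \<partial>lamI)"
  proof (rule nn_integral_mono_AE)
    show "AE y in lamI. ennreal \<bar>g x\<bar> \<le> ennreal \<bar>f y\<bar> + var01 g"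
      using gf AE_space
    proof eventually_elim
      case (elim y)
      then have y: "y \<in> {0..1}" using space_lamI by simp
      have "ennreal \<bar>g x\<bar> \<le> ennreal (\<bar>g y\<bar> + \<bar>g x - g y\<bar>)" by (rule ennreal_leI) linarith
      also have "\<dots> = ennreal \<bar>f y\<bar> + ennreal \<bar>g x - g y\<bar>" using elim by (simp add: ennreal_plus)
      also have "ennreal \<bar>g x - g y\<bar> \<le> var01 g" unfolding var01_varOn using x y by (rule varOn_pair)
      finally show ?case by (simp add: add_left_mono)
    qed
  qed
  also have "\<dots> = L1norm f + var01 g"
    unfolding L1norm_def using f sp by (subst nn_integral_add) auto
  finally show ?thesis .
qed

lemma INF_G'_le:
  "(INF g\<in>{g. (AE x in lamI. g x = f x) \<and> var01 g < top}. var01 g) \<le> Vvar f"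
  unfolding Vvar_def
proof (rule INF_greatest)
  fix g assume g: "g \<in> {g. AE x in lamI. g x = f x}"
  show "(INF g\<in>{g. (AE x in lamI. g x = f x) \<and> var01 g < top}. var01 g) \<le> var01 g"
  proof (cases "var01 g < top")
    case True then show ?thesis using g by (intro INF_lower) auto
  next
    case False then show ?thesis by (simp add: top_unique not_less)
  qed
qed

lemma G'_ne: "Vvar f < top \<Longrightarrow> {g. (AE x in lamI. g x = f x) \<and> var01 g < top} \<noteq> {}"
  unfolding Vvar_def by (auto simp: INF_less_iff)

lemma hole_bound:
  fixes f :: "real \<Rightarrow> real"
  assumes f: "integrable lamI f" and H: "H \<subseteq> {0..1}" "H \<in> sets lebesgue" and fin: "Vvar f < top"
  shows "L1norm (\<lambda>x. f x - f x * indicator ({0..1} - H) x) \<le> ennreal (measure lebesgue H) * (L1norm f + Vvar f)"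
proof -
  let ?G = "{g. (AE x in lamI. g x = f x) \<and> var01 g < top}"
  have Hl: "H \<in> sets lamI" using H by (auto simp: sets_restrict_space_iff)
  have X: "L1norm (\<lambda>x. f x - f x * indicator ({0..1} - H) x) \<le> ennreal (measure lebesgue H) * (L1norm f + var01 g)"
    if g: "g \<in> ?G" for g
  proof -
    have gf: "AE x in lamI. g x = f x" using g by auto
    have "L1norm (\<lambda>x. f x - f x * indicator ({0..1} - H) x) = (\<integral>\<^sup>+x. ennreal \<bar>f x\<bar> * indicator H x \<partial>lamI)"
      unfolding L1norm_def by (intro nn_integral_cong) (auto simp: indicator_def space_lamI)
    also have "\<dots> \<le> (\<integral>\<^sup>+x. (L1norm f + var01 g) * indicator H x \<partial>lamI)"
    proof (rule nn_integral_mono_AE)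
      show "AE x in lamI. ennreal \<bar>f x\<bar> * indicator H x \<le> (L1norm f + var01 g) * indicator H x"
        using gf
      proof eventually_elim
        case (elim x)
        show ?case
        proof (cases "x \<in> H")
          case True
          then have "x \<in> {0..1}" using H by auto
          then have "ennreal \<bar>g x\<bar> \<le> L1norm f + var01 g" by (rule ess_bound[OF f gf])
          then show ?thesis using elim True by (simp add: indicator_def)
        qed (simp add: indicator_def)
      qed
    qed
    also have "\<dots> = (L1norm f + var01 g) * emeasure lamI H" using Hl by (simp add: nn_integral_cmult_indicator)
    also have "\<dots> = ennreal (measure lebesgue H) * (L1norm f + var01 g)"
      using emeasure_lamI_eq[OF H] by (simp add: mult.commute)
    finally show ?thesis .
  qed
  have "L1norm (\<lambda>x. f x - f x * indicator ({0..1} - H) x) \<le> ennreal (measure lebesgue H) * (INF g\<in>?G. L1norm f + var01 g)"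
    by (rule ennreal_mult_INF_ge[OF G'_ne[OF fin]]) (rule X)
  also have "(INF g\<in>?G. L1norm f + var01 g) \<le> L1norm f + (INF g\<in>?G. var01 g)"
    by (rule INF_add_ge[OF G'_ne[OF fin]]) (rule INF_lower)
  also have "\<dots> \<le> L1norm f + Vvar f" using INF_G'_le[of f] by (rule add_left_mono)
  finally show ?thesis by (simp add: mult_left_mono)
qed



theorem lemma4p2:
  fixes T :: "real \<Rightarrow> real" and P :: "(real \<Rightarrow> real) \<Rightarrow> (real \<Rightarrow> real)"
    and \<alpha>0 B0 :: real and \<eta> :: "real set set"
  assumes T: "nonsingular01 T"
    and P: "is_PF T P"
    and \<alpha>0: "0 < \<alpha>0" "\<alpha>0 < 1" and B0: "0 \<le> B0"
    and LY: "\<And>f. f \<in> BV01 \<Longrightarrow> Vvar (P f) \<le> ennreal \<alpha>0 * Vvar f + ennreal B0 * L1norm f"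
    and eta: "interval_partition01 \<eta>"
  shows "mixnorm (\<lambda>f x. Pi_eta \<eta> (P (Pi_eta \<eta> f)) x - P f x)
           \<le> ennreal (max (\<alpha>0 + 1) B0 * mesh \<eta>) \<and>
         (\<forall>H. open H \<and> is_interval H \<and> H \<subseteq> {0..1} \<and>
           measure lborel H \<le> max (\<alpha>0 + 1) B0 * mesh \<eta> \<longrightarrow>
           mixnorm (\<lambda>f x. Pi_eta \<eta> (P (Pi_eta \<eta> f)) x - P_hole P H f x)
             \<le> ennreal (2 * max (\<alpha>0 + 1) B0 * mesh \<eta>))"
proof -
  define \<Gamma> where "\<Gamma> = max (\<alpha>0 + 1) B0"
  define \<epsilon> where "\<epsilon> = mesh \<eta>"
  have e0: "0 \<le> \<epsilon>" unfolding \<epsilon>_def by (rule mesh_nonneg[OF eta])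
  have G1: "\<alpha>0 + 1 \<le> \<Gamma>" "B0 \<le> \<Gamma>" unfolding \<Gamma>_def by auto
  have G0: "0 \<le> \<Gamma>" using G1 \<alpha>0 by linarith
  have Pint: "\<And>h. integrable lamI h \<Longrightarrow> integrable lamI (P h)" using P unfolding is_PF_def by auto
  have basic: "integrable lamI f \<and> Vvar f < top \<and>
      (\<exists>v l. Vvar f = ennreal v \<and> L1norm f = ennreal l \<and> 0 \<le> v \<and> 0 \<le> l \<and> v + l \<le> 1)"
    if f: "f \<in> BV01" "BVnorm f \<le> 1" for f
  proof -
    have fi: "integrable lamI f" and fV: "Vvar f < top" using f unfolding BV01_def by auto
    have s: "Vvar f + L1norm f \<le> 1" using f unfolding BVnorm_def by auto
    have "Vvar f \<le> Vvar f + L1norm f" by (rule add_increasing2) auto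
    then have "Vvar f \<le> 1" using s by (rule order_trans)
    then obtain v where v: "Vvar f = ennreal v" "0 \<le> v"
      by (cases "Vvar f" rule: ennreal_cases) (auto simp: top_unique)
    have "L1norm f \<le> Vvar f + L1norm f" by (rule add_increasing) auto
    then have "L1norm f \<le> 1" using s by (rule order_trans)
    then obtain l where l: "L1norm f = ennreal l" "0 \<le> l"
      by (cases "L1norm f" rule: ennreal_cases) (auto simp: top_unique)
    have "ennreal (v + l) \<le> 1" using s v l by (simp add: ennreal_plus)
    then have "v + l \<le> 1" by (metis ennreal_1 ennreal_le_iff zero_le_one)
    then show ?thesis using fi fV v l by blast
  qed
  have part1: "L1norm (\<lambda>x. Pi_eta \<eta> (P (Pi_eta \<eta> f)) x - P f x) \<le> ennreal (\<Gamma> * \<epsilon>)"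
    if f: "f \<in> BV01" "BVnorm f \<le> 1" for f
  proof -
    obtain v l where fi: "integrable lamI f" and fV: "Vvar f < top" and
      v: "Vvar f = ennreal v" "0 \<le> v" and l: "L1norm f = ennreal l" "0 \<le> l" and vl: "v + l \<le> 1"
      using basic[OF f] by blast
    have Pfi: "integrable lamI (P f)" using Pint[OF fi] .
    have Pii: "integrable lamI (Pi_eta \<eta> f)" by (rule Pi_integrable[OF eta])
    have PPii: "integrable lamI (P (Pi_eta \<eta> f))" using Pint[OF Pii] .
    have A: "L1norm (\<lambda>x. Pi_eta \<eta> (P (Pi_eta \<eta> f)) x - Pi_eta \<eta> (P f) x) \<le> ennreal \<epsilon> * Vvar f"
    proof -
      have "(\<lambda>x. Pi_eta \<eta> (P (Pi_eta \<eta> f)) x - Pi_eta \<eta> (P f) x) = Pi_eta \<eta> (\<lambda>y. P (Pi_eta \<eta> f) y - P f y)"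
        using Pi_diff[OF eta PPii Pfi] by auto
      then have "L1norm (\<lambda>x. Pi_eta \<eta> (P (Pi_eta \<eta> f)) x - Pi_eta \<eta> (P f) x) \<le> L1norm (\<lambda>y. P (Pi_eta \<eta> f) y - P f y)"
        using Pi_contract[OF eta, of "\<lambda>y. P (Pi_eta \<eta> f) y - P f y"] PPii Pfi by auto
      also have "\<dots> \<le> L1norm (\<lambda>y. Pi_eta \<eta> f y - f y)" by (rule PF_contract[OF T P Pii fi])
      also have "\<dots> \<le> ennreal \<epsilon> * Vvar f" unfolding \<epsilon>_def by (rule Pi_Vvar_bound[OF eta fi fV])
      finally show ?thesis .
    qed
    have LYf: "Vvar (P f) \<le> ennreal (\<alpha>0 * v + B0 * l)"
      using LY[OF f(1)] v l \<alpha>0 B0 by (simp add: ennreal_mult ennreal_plus)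
    then have PfV: "Vvar (P f) < top" by (rule le_less_trans) simp
    have B: "L1norm (\<lambda>x. Pi_eta \<eta> (P f) x - P f x) \<le> ennreal \<epsilon> * ennreal (\<alpha>0 * v + B0 * l)"
    proof -
      have "L1norm (\<lambda>x. Pi_eta \<eta> (P f) x - P f x) \<le> ennreal \<epsilon> * Vvar (P f)"
        unfolding \<epsilon>_def by (rule Pi_Vvar_bound[OF eta Pfi PfV])
      also have "\<dots> \<le> ennreal \<epsilon> * ennreal (\<alpha>0 * v + B0 * l)" using LYf by (rule mult_left_mono) simp
      finally show ?thesis .
    qed
    have "L1norm (\<lambda>x. Pi_eta \<eta> (P (Pi_eta \<eta> f)) x - P f x)
        \<le> L1norm (\<lambda>x. Pi_eta \<eta> (P (Pi_eta \<eta> f)) x - Pi_eta \<eta> (P f) x) + L1norm (\<lambda>x. Pi_eta \<eta> (P f) x - P f x)"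
      using Pi_meas[OF eta] Pfi by (intro L1_triangle) auto
    also have "\<dots> \<le> ennreal \<epsilon> * ennreal v + ennreal \<epsilon> * ennreal (\<alpha>0 * v + B0 * l)"
      using A B v by (intro add_mono) auto
    also have "\<dots> = ennreal (\<epsilon> * v + \<epsilon> * (\<alpha>0 * v + B0 * l))"
      using e0 v l \<alpha>0 B0 by (simp add: ennreal_mult ennreal_plus)
    also have "\<dots> \<le> ennreal (\<Gamma> * \<epsilon>)"
    proof (rule ennreal_leI)
      have "(\<alpha>0 + 1) * v \<le> \<Gamma> * v" using G1(1) v(2) by (rule mult_right_mono)
      moreover have "B0 * l \<le> \<Gamma> * l" using G1(2) l(2) by (rule mult_right_mono)
      moreover have "\<Gamma> * (v + l) \<le> \<Gamma> * 1" using vl G0 by (rule mult_left_mono)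
      ultimately have "v + (\<alpha>0 * v + B0 * l) \<le> \<Gamma>" by (simp add: algebra_simps)
      then have "\<epsilon> * (v + (\<alpha>0 * v + B0 * l)) \<le> \<epsilon> * \<Gamma>" using e0 by (rule mult_left_mono)
      then show "\<epsilon> * v + \<epsilon> * (\<alpha>0 * v + B0 * l) \<le> \<Gamma> * \<epsilon>" by (simp add: algebra_simps)
    qed
    finally show ?thesis .
  qed
  have part2: "L1norm (\<lambda>x. Pi_eta \<eta> (P (Pi_eta \<eta> f)) x - P_hole P H f x) \<le> ennreal (2 * \<Gamma> * \<epsilon>)"
    if f: "f \<in> BV01" "BVnorm f \<le> 1" and H: "open H" "H \<subseteq> {0..1}" "measure lborel H \<le> \<Gamma> * \<epsilon>" for f and H :: "real set"
  proof -
    obtain v l where fi: "integrable lamI f" and fV: "Vvar f < top" and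
      v: "Vvar f = ennreal v" "0 \<le> v" and l: "L1norm f = ennreal l" "0 \<le> l" and vl: "v + l \<le> 1"
      using basic[OF f] by blast
    have Hb: "H \<in> sets borel" using H(1) by auto
    have Hleb: "H \<in> sets lebesgue" using Hb by auto
    have mH: "measure lebesgue H = measure lborel H" using Hb by simp
    have IH: "{0..1} - H \<in> sets lamI" using Hleb by (auto simp: sets_restrict_space_iff)
    define fh where "fh x = f x * indicator ({0..1} - H) x" for x
    have fhi: "integrable lamI fh"
      using integrable_ind_lamI[OF fi IH] unfolding fh_def by (simp add: mult.commute)
    have Pfi: "integrable lamI (P f)" using Pint[OF fi] .
    have Pfhi: "integrable lamI (P fh)" using Pint[OF fhi] .
    have ph: "P_hole P H f = P fh" unfolding P_hole_def fh_def[abs_def] ..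
    have "L1norm (\<lambda>x. Pi_eta \<eta> (P (Pi_eta \<eta> f)) x - P_hole P H f x)
        \<le> L1norm (\<lambda>x. Pi_eta \<eta> (P (Pi_eta \<eta> f)) x - P f x) + L1norm (\<lambda>x. P f x - P fh x)"
      unfolding ph using Pi_meas[OF eta] Pfi Pfhi by (intro L1_triangle) auto
    also have "\<dots> \<le> ennreal (\<Gamma> * \<epsilon>) + ennreal (\<Gamma> * \<epsilon>)"
    proof (rule add_mono)
      show "L1norm (\<lambda>x. Pi_eta \<eta> (P (Pi_eta \<eta> f)) x - P f x) \<le> ennreal (\<Gamma> * \<epsilon>)" by (rule part1[OF f])
      have "L1norm (\<lambda>x. P f x - P fh x) \<le> L1norm (\<lambda>x. f x - fh x)" by (rule PF_contract[OF T P fi fhi])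
      also have "\<dots> \<le> ennreal (measure lebesgue H) * (L1norm f + Vvar f)"
        unfolding fh_def by (rule hole_bound[OF fi H(2) Hleb fV])
      also have "\<dots> = ennreal (measure lborel H * (l + v))"
        using v l mH by (simp add: ennreal_mult ennreal_plus)
      also have "\<dots> \<le> ennreal (\<Gamma> * \<epsilon>)"
      proof (rule ennreal_leI)
        have "measure lborel H * (l + v) \<le> measure lborel H * 1"
          using vl by (intro mult_left_mono) auto
        then show "measure lborel H * (l + v) \<le> \<Gamma> * \<epsilon>" using H(3) by simp
      qed
      finally show "L1norm (\<lambda>x. P f x - P fh x) \<le> ennreal (\<Gamma> * \<epsilon>)" .
    qed
    also have "\<dots> = ennreal (2 * \<Gamma> * \<epsilon>)"
      using G0 e0 by (simp add: ennreal_plus[symmetric])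
    finally show ?thesis .
  qed
  show ?thesis
  proof (intro conjI allI impI)
    show "mixnorm (\<lambda>f x. Pi_eta \<eta> (P (Pi_eta \<eta> f)) x - P f x) \<le> ennreal (max (\<alpha>0 + 1) B0 * mesh \<eta>)"
      unfolding mixnorm_def using part1 unfolding \<Gamma>_def \<epsilon>_def by (intro SUP_least) auto
  next
    fix H :: "real set" assume H: "open H \<and> is_interval H \<and> H \<subseteq> {0..1} \<and> measure lborel H \<le> max (\<alpha>0 + 1) B0 * mesh \<eta>"
    show "mixnorm (\<lambda>f x. Pi_eta \<eta> (P (Pi_eta \<eta> f)) x - P_hole P H f x) \<le> ennreal (2 * max (\<alpha>0 + 1) B0 * mesh \<eta>)"
      unfolding mixnorm_def using part2[of _ H] H unfolding \<Gamma>_def \<epsilon>_def by (intro SUP_least) auto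
  qed
qed


end
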